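(* Let $g:\mathbb{R}^m\to\mathbb{R}$ be separable convex, i.e. $g(v) = \sum_{i=1}^m g_i(v_i)$ with each $g_i:\mathbb{R}\to\mathbb{R}$ convex, and let $W\in\mathbb{Z}^{m\times n}$. Then $f(x) = g(Wx)$ admits a $\delta$-proximity with $\delta \le 2m(2m\|W\|_\infty + 1)^m$; that is, for every minimizer $x^\star$ of $f$ over $[0,1]^n$ with at most $m$ fractional entries there exists a minimizer $z^\star$ of $f$ over $\{0,1\}^n$ with $\|x^\star - z^\star\|_1 \le 2m(2m\|W\|_\infty + 1)^m$.
   Context: $\|W\|_\infty$ denotes the maximum absolute value of an entry of $W$. A fractional entry of $x\in[0,1]^n$ is an entry not in $\{0,1\}$. *)

theory Defs
  imports "HOL-Analysis.Analysis"
begin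

definition is_minimizer_on :: "('a \<Rightarrow> real) \<Rightarrow> 'a set \<Rightarrow> 'a \<Rightarrow> bool" where
  "is_minimizer_on f S x \<longleftrightarrow> x \<in> S \<and> (\<forall>y\<in>S. f x \<le> f y)"

definition unit_cube :: "(real ^ 'n) set" where
  "unit_cube = {x. \<forall>j. 0 \<le> x $ j \<and> x $ j \<le> 1}"

definition binary_vecs :: "(real ^ 'n) set" where
  "binary_vecs = {x. \<forall>j. x $ j \<in> {0, 1}}"

definition fractional_entries :: "real ^ 'n \<Rightarrow> 'n set" where
  "fractional_entries x = {j. x $ j \<notin> {0, 1}}"

definition max_abs_entry :: "int ^ 'n ^ 'm \<Rightarrow> int" where
  "max_abs_entry W = Max {\<bar>W $ i $ j\<bar> | i j. True}"

definition int_mat_vec :: "int ^ 'n ^ 'm \<Rightarrow> real ^ 'n \<Rightarrow> real ^ 'm" where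
  "int_mat_vec W x = (\<chi> i. \<Sum>j\<in>UNIV. of_int (W $ i $ j) * x $ j)"

definition l1_dist :: "real ^ 'n \<Rightarrow> real ^ 'n \<Rightarrow> real" where
  "l1_dist x z = (\<Sum>j\<in>UNIV. \<bar>x $ j - z $ j\<bar>)"

end

theory Submission
  imports Defs
begin

lemma "DIM((real^'m::finite) \<times> real) = CARD('m) + 1" by simp
lemma kernel:
  fixes phi :: "'a \<Rightarrow> (real^'m::finite) \<times> real"
  assumes "finite F" "card F > CARD('m) + 1"
  shows "\<exists>y. (\<exists>a\<in>F. y a \<noteq> 0) \<and> (\<Sum>a\<in>F. y a *\<^sub>R phi a) = 0"
proof (cases "inj_on phi F")
  case False
  then obtain a b where ab: "a \<in> F" "b \<in> F" "a \<noteq> b" "phi a = phi b" by (auto simp: inj_on_def)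
  define y where "y = (\<lambda>c. if c = a then (1::real) else if c = b then -1 else 0)"
  have "(\<Sum>c\<in>F. y c *\<^sub>R phi c) = (\<Sum>c\<in>{a,b}. y c *\<^sub>R phi c)"
    by (rule sum.mono_neutral_right) (use assms ab in \<open>auto simp: y_def\<close>)
  also have "\<dots> = 0" using ab by (simp add: y_def)
  finally show ?thesis using ab by (auto simp: y_def intro!: exI[of _ y])
next
  case True
  have "card (phi ` F) > DIM((real^'m) \<times> real)" using True assms by (simp add: card_image)
  then have "dependent (phi ` F)" using dependent_biggerset[of "phi ` F"] assms by auto
  then obtain T U where TU: "finite T" "T \<subseteq> phi ` F" "\<exists>w\<in>T. U w \<noteq> 0" "(\<Sum>w\<in>T. U w *\<^sub>R w) = 0"
    unfolding dependent_explicit by blast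
  define y where "y = (\<lambda>c. if phi c \<in> T then U (phi c) else 0)"
  have "(\<Sum>c\<in>F. y c *\<^sub>R phi c) = (\<Sum>w\<in>phi ` F. (if w \<in> T then U w else 0) *\<^sub>R w)"
    using True by (simp add: sum.reindex y_def)
  also have "\<dots> = (\<Sum>w\<in>T. U w *\<^sub>R w)"
    by (rule sum.mono_neutral_cong_right) (use assms TU in auto)
  moreover obtain w where "w \<in> T" "U w \<noteq> 0" using TU by blast
  moreover then obtain c where "c \<in> F" "w = phi c" using TU by blast
  ultimately show ?thesis using TU(4) by (auto simp: y_def intro!: exI[of _ y])
qed
lemma reduce:
  fixes v :: "'a \<Rightarrow> real^'m::finite"
  assumes "finite B"
  shows "\<forall>a\<in>B. 0 \<le> mu a \<and> mu a \<le> 1 \<Longrightarrow> \<exists>mu'. (\<forall>a\<in>B. 0 \<le> mu' a \<and> mu' a \<le> 1) \<and>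
     (\<Sum>a\<in>B. mu' a *\<^sub>R v a) = (\<Sum>a\<in>B. mu a *\<^sub>R v a) \<and> (\<Sum>a\<in>B. mu' a) = (\<Sum>a\<in>B. mu a) \<and>
     card {a\<in>B. 0 < mu' a \<and> mu' a < 1} \<le> CARD('m) + 1"
proof (induction "card {a\<in>B. 0 < mu a \<and> mu a < 1}" arbitrary: mu rule: less_induct)
  case (less mu)
  define Fr where "Fr = {a\<in>B. 0 < mu a \<and> mu a < 1}"
  have finFr: "finite Fr" using assms by (simp add: Fr_def)
  show ?case
  proof (cases "card Fr \<le> CARD('m) + 1")
    case True
    then show ?thesis using less.prems by (auto simp: Fr_def)
  next
    case False
    define phi where "phi = (\<lambda>a. (v a, 1::real))"
    obtain y where y: "\<exists>a\<in>Fr. y a \<noteq> 0" "(\<Sum>a\<in>Fr. y a *\<^sub>R phi a) = 0"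
      using kernel[of Fr phi] finFr False by auto
    have y1: "(\<Sum>a\<in>Fr. y a *\<^sub>R v a) = 0"
      using arg_cong[OF y(2), of fst] by (simp add: fst_sum phi_def)
    have y2: "(\<Sum>a\<in>Fr. y a) = 0"
      using arg_cong[OF y(2), of snd] by (simp add: snd_sum phi_def)
    define Y where "Y = {a\<in>Fr. y a \<noteq> 0}"
    have finY: "finite Y" "Y \<noteq> {}" using finFr y(1) by (auto simp: Y_def)
    define tau where "tau = (\<lambda>a. if y a > 0 then (1 - mu a) / y a else mu a / (- y a))"
    define t where "t = Min (tau ` Y)"
    have "t \<in> tau ` Y" unfolding t_def using finY by (intro Min_in) auto
    then obtain a0 where a0: "a0 \<in> Y" "tau a0 = t" by auto
    have tle: "\<And>a. a \<in> Y \<Longrightarrow> t \<le> tau a" using finY by (simp add: t_def)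
    have taupos: "\<And>a. a \<in> Y \<Longrightarrow> tau a > 0"
      by (auto simp: tau_def Y_def Fr_def divide_pos_pos divide_pos_neg)
    have tpos: "t > 0" using taupos a0 by auto
    define y' where "y' = (\<lambda>a. if a \<in> Fr then y a else 0)"
    define mu' where "mu' = (\<lambda>a. mu a + t * y' a)"
    have mu'01: "\<forall>a\<in>B. 0 \<le> mu' a \<and> mu' a \<le> 1"
    proof
      fix a assume aB: "a \<in> B"
      show "0 \<le> mu' a \<and> mu' a \<le> 1"
      proof (cases "a \<in> Y")
        case True
        then have ta: "t \<le> tau a" using tle by auto
        have m01: "0 < mu a" "mu a < 1" "a \<in> Fr" using True by (auto simp: Y_def Fr_def)
        show ?thesis
        proof (cases "y a > 0")
          case True
          then have "t * y a \<le> 1 - mu a" using ta by (simp add: tau_def pos_le_divide_eq)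
          then show ?thesis using True m01 tpos by (simp add: mu'_def y'_def)
        next
          case False
          then have yn: "y a < 0" using \<open>a \<in> Y\<close> by (auto simp: Y_def)
          have "t \<le> mu a / (- y a)" using ta False by (simp add: tau_def)
          then have "t * (- y a) \<le> mu a" using yn by (subst (asm) pos_le_divide_eq) auto
          moreover have "t * y a \<le> 0" using yn tpos by (simp add: mult_nonneg_nonpos)
          ultimately show ?thesis using yn m01 tpos by (simp add: mu'_def y'_def)
        qed
      next
        case False
        then have "y' a = 0" by (auto simp: y'_def Y_def)
        then show ?thesis using less.prems aB by (simp add: mu'_def)
      qed
    qed
    have a0int: "mu' a0 = 0 \<or> mu' a0 = 1"
    proof -
      have "y a0 \<noteq> 0" "a0 \<in> Fr" using a0 by (auto simp: Y_def)
      then show ?thesis using a0(2)[symmetric]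
        by (auto simp: mu'_def y'_def tau_def field_simps split: if_splits)
    qed
    have sub: "{a\<in>B. 0 < mu' a \<and> mu' a < 1} \<subseteq> Fr - {a0}"
    proof
      fix a assume a: "a \<in> {a\<in>B. 0 < mu' a \<and> mu' a < 1}"
      have "a \<in> Fr"
      proof (rule ccontr)
        assume "a \<notin> Fr"
        then have "mu' a = mu a" by (simp add: mu'_def y'_def)
        then show False using a \<open>a \<notin> Fr\<close> by (auto simp: Fr_def)
      qed
      moreover have "a \<noteq> a0" using a a0int by auto
      ultimately show "a \<in> Fr - {a0}" by simp
    qed
    have "a0 \<in> Fr" using a0 by (simp add: Y_def)
    then have "card {a\<in>B. 0 < mu' a \<and> mu' a < 1} < card Fr"
    proof -
      have "card {a\<in>B. 0 < mu' a \<and> mu' a < 1} \<le> card (Fr - {a0})"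
        using sub finFr by (intro card_mono) auto
      also have "\<dots> < card Fr" using finFr \<open>a0 \<in> Fr\<close> by (rule card_Diff1_less)
      finally show ?thesis .
    qed
    then obtain mu'' where mu'': "\<forall>a\<in>B. 0 \<le> mu'' a \<and> mu'' a \<le> 1"
      "(\<Sum>a\<in>B. mu'' a *\<^sub>R v a) = (\<Sum>a\<in>B. mu' a *\<^sub>R v a)" "(\<Sum>a\<in>B. mu'' a) = (\<Sum>a\<in>B. mu' a)"
      "card {a\<in>B. 0 < mu'' a \<and> mu'' a < 1} \<le> CARD('m) + 1"
      using less.hyps[of mu'] mu'01 unfolding Fr_def by blast
    have FrB: "Fr \<subseteq> B" by (auto simp: Fr_def)
    have s1: "(\<Sum>a\<in>B. y' a *\<^sub>R v a) = (\<Sum>a\<in>Fr. y a *\<^sub>R v a)"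
      using sum.mono_neutral_cong_right[OF assms FrB, of "\<lambda>a. y' a *\<^sub>R v a" "\<lambda>a. y a *\<^sub>R v a"]
      by (auto simp: y'_def)
    have s2: "(\<Sum>a\<in>B. y' a) = (\<Sum>a\<in>Fr. y a)"
      using sum.mono_neutral_cong_right[OF assms FrB, of "\<lambda>a. y' a" "\<lambda>a. y a"]
      by (auto simp: y'_def)
    have "(\<Sum>a\<in>B. mu' a *\<^sub>R v a) = (\<Sum>a\<in>B. mu a *\<^sub>R v a) + t *\<^sub>R (\<Sum>a\<in>B. y' a *\<^sub>R v a)"
      by (simp add: mu'_def scaleR_add_left sum.distrib scaleR_sum_right)
    then have e1: "(\<Sum>a\<in>B. mu' a *\<^sub>R v a) = (\<Sum>a\<in>B. mu a *\<^sub>R v a)" using s1 y1 by simp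
    have "(\<Sum>a\<in>B. mu' a) = (\<Sum>a\<in>B. mu a) + t * (\<Sum>a\<in>B. y' a)"
      by (simp add: mu'_def sum.distrib sum_distrib_left)
    then have e2: "(\<Sum>a\<in>B. mu' a) = (\<Sum>a\<in>B. mu a)" using s2 y2 by simp
    show ?thesis using mu'' e1 e2 by (intro exI[of _ mu'']) simp
  qed
qed

lemma sum_comp_bound:
  fixes v :: "'a \<Rightarrow> real^'m::finite"
  assumes "finite S" "\<forall>a\<in>S. \<forall>i. \<bar>v a $ i\<bar> \<le> D"
  shows "\<bar>(\<Sum>a\<in>S. v a) $ i\<bar> \<le> real (card S) * D"
proof -
  have "\<bar>(\<Sum>a\<in>S. v a) $ i\<bar> = \<bar>\<Sum>a\<in>S. v a $ i\<bar>" by simp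
  also have "\<dots> \<le> (\<Sum>a\<in>S. \<bar>v a $ i\<bar>)" by (rule sum_abs)
  also have "\<dots> \<le> (\<Sum>a\<in>S. D)" using assms by (intro sum_mono) auto
  finally show ?thesis by simp
qed

lemma generic_chain:
  assumes "finite B"
  shows "\<exists>P. (\<forall>j\<le>card B. P j \<subseteq> B \<and> card (P j) = j) \<and> (\<forall>j<card B. P j \<subseteq> P (Suc j))"
proof -
  obtain xs where xs: "set xs = B" "distinct xs" using finite_distinct_list[OF assms] by blast
  have len: "length xs = card B" using xs distinct_card by fastforce
  show ?thesis
  proof (intro exI[of _ "\<lambda>j. set (take j xs)"] conjI allI impI)
    fix j assume "j \<le> card B"
    then show "set (take j xs) \<subseteq> B" "card (set (take j xs)) = j"
      using xs len by (auto simp: distinct_card dest: in_set_takeD)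
  next
    fix j assume "j < card B"
    show "set (take j xs) \<subseteq> set (take (Suc j) xs)"
      by (simp add: set_take_subset_set_take)
  qed
qed

lemma top_bound:
  fixes v :: "'a \<Rightarrow> real^'m::finite"
  assumes "finite B" "\<forall>a\<in>B. 0 \<le> lam a \<and> lam a \<le> 1" "\<forall>a\<in>B. \<forall>i. \<bar>v a $ i\<bar> \<le> D"
    "(\<Sum>a\<in>B. lam a *\<^sub>R v a) = 0" "(\<Sum>a\<in>B. lam a) = real (card B) - real CARD('m)"
  shows "\<bar>(\<Sum>a\<in>B. v a) $ i\<bar> \<le> real CARD('m) * D"
proof -
  have "(\<Sum>a\<in>B. v a) = (\<Sum>a\<in>B. v a) - (\<Sum>a\<in>B. lam a *\<^sub>R v a)" using assms(4) by simp
  also have "\<dots> = (\<Sum>a\<in>B. (1 - lam a) *\<^sub>R v a)"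
    by (simp add: sum_subtractf[symmetric] scaleR_diff_left)
  finally have "\<bar>(\<Sum>a\<in>B. v a) $ i\<bar> = \<bar>\<Sum>a\<in>B. (1 - lam a) * v a $ i\<bar>" by simp
  also have "\<dots> \<le> (\<Sum>a\<in>B. \<bar>(1 - lam a) * v a $ i\<bar>)" by (rule sum_abs)
  also have "\<dots> \<le> (\<Sum>a\<in>B. (1 - lam a) * D)"
  proof (intro sum_mono)
    fix a assume "a \<in> B"
    then have "0 \<le> 1 - lam a" "\<bar>v a $ i\<bar> \<le> D" using assms by auto
    then show "\<bar>(1 - lam a) * v a $ i\<bar> \<le> (1 - lam a) * D"
      by (simp add: abs_mult mult_left_mono)
  qed
  also have "\<dots> = (real (card B) - (\<Sum>a\<in>B. lam a)) * D"
    by (simp add: sum_distrib_right[symmetric] sum_subtractf)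
  also have "\<dots> = real CARD('m) * D" using assms(5) by simp
  finally show ?thesis .
qed

lemma step:
  fixes v :: "'a \<Rightarrow> real^'m::finite"
  assumes "finite B" "card B = Suc k" "CARD('m) \<le> k" "\<forall>a\<in>B. 0 \<le> lam a \<and> lam a \<le> 1"
    "(\<Sum>a\<in>B. lam a *\<^sub>R v a) = 0" "(\<Sum>a\<in>B. lam a) = real (Suc k) - real CARD('m)"
  shows "\<exists>a\<in>B. \<exists>lam'. (\<forall>b\<in>B-{a}. 0 \<le> lam' b \<and> lam' b \<le> 1) \<and>
     (\<Sum>b\<in>B-{a}. lam' b *\<^sub>R v b) = 0 \<and> (\<Sum>b\<in>B-{a}. lam' b) = real k - real CARD('m)"
proof -
  define c where "c = (real k - real CARD('m)) / (real (Suc k) - real CARD('m))"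
  have c01: "0 \<le> c" "c \<le> 1" using assms(3) by (auto simp: c_def field_simps)
  define mu where "mu = (\<lambda>a. c * lam a)"
  have mu01: "\<forall>a\<in>B. 0 \<le> mu a \<and> mu a \<le> 1"
    using assms(4) c01 by (auto simp: mu_def mult_le_one)
  obtain mu' where mu': "\<forall>a\<in>B. 0 \<le> mu' a \<and> mu' a \<le> 1"
     "(\<Sum>a\<in>B. mu' a *\<^sub>R v a) = (\<Sum>a\<in>B. mu a *\<^sub>R v a)" "(\<Sum>a\<in>B. mu' a) = (\<Sum>a\<in>B. mu a)"
     "card {a\<in>B. 0 < mu' a \<and> mu' a < 1} \<le> CARD('m) + 1"
    using reduce[OF assms(1) mu01, of v] by blast
  have "(\<Sum>a\<in>B. mu a *\<^sub>R v a) = c *\<^sub>R (\<Sum>a\<in>B. lam a *\<^sub>R v a)"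
    by (simp add: mu_def scaleR_sum_right)
  then have sv: "(\<Sum>a\<in>B. mu' a *\<^sub>R v a) = 0"
    using mu'(2) assms(5) by simp
  have "(\<Sum>a\<in>B. mu a) = c * (\<Sum>a\<in>B. lam a)" by (simp add: mu_def sum_distrib_left)
  also have "\<dots> = real k - real CARD('m)" using assms(6) assms(3) by (simp add: c_def)
  finally have ss: "(\<Sum>a\<in>B. mu' a) = real k - real CARD('m)"
    using mu'(3) by simp
  have "\<exists>a\<in>B. mu' a = 0"
  proof (rule ccontr)
    assume "\<not> ?thesis"
    then have pos: "\<forall>a\<in>B. 0 < mu' a" using mu'(1) by force
    define Fr where "Fr = {a\<in>B. 0 < mu' a \<and> mu' a < 1}"
    define On where "On = {a\<in>B. mu' a = 1}"
    have BU: "B = Fr \<union> On" "Fr \<inter> On = {}" using pos mu'(1) by (auto simp: Fr_def On_def)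
    have fin: "finite Fr" "finite On" using assms(1) by (auto simp: Fr_def On_def)
    have cardB: "card Fr + card On = Suc k" using BU fin assms(2) card_Un_disjoint by metis
    have "(\<Sum>a\<in>B. mu' a) = (\<Sum>a\<in>Fr. mu' a) + (\<Sum>a\<in>On. mu' a)"
      using BU fin sum.union_disjoint by metis
    also have "(\<Sum>a\<in>On. mu' a) = real (card On)" by (simp add: On_def)
    finally have eq: "(\<Sum>a\<in>B. mu' a) = (\<Sum>a\<in>Fr. mu' a) + real (card On)" .
    show False
    proof (cases "Fr = {}")
      case True
      then show ?thesis using eq ss cardB by simp
    next
      case False
      have "(\<Sum>a\<in>Fr. mu' a) > 0" using False fin by (intro sum_pos) (auto simp: Fr_def)
      moreover have "card Fr \<le> CARD('m) + 1" using mu'(4) by (simp add: Fr_def)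
      ultimately show ?thesis using eq ss cardB by linarith
    qed
  qed
  then obtain a where a: "a \<in> B" "mu' a = 0" by blast
  have "(\<Sum>b\<in>B-{a}. mu' b *\<^sub>R v b) = (\<Sum>b\<in>B. mu' b *\<^sub>R v b)"
    using a assms(1) by (simp add: sum_diff1)
  moreover have "(\<Sum>b\<in>B-{a}. mu' b) = (\<Sum>b\<in>B. mu' b)"
    using a assms(1) by (simp add: sum_diff1)
  ultimately have "(\<Sum>b\<in>B-{a}. mu' b *\<^sub>R v b) = 0 \<and> (\<Sum>b\<in>B-{a}. mu' b) = real k - real CARD('m)"
    using sv ss by simp
  moreover have "\<forall>b\<in>B-{a}. 0 \<le> mu' b \<and> mu' b \<le> 1" using mu'(1) by blast
  ultimately show ?thesis using a(1) by blast
qed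

lemma chain:
  fixes v :: "'a \<Rightarrow> real^'m::finite"
  assumes D: "0 \<le> D"
  shows "\<forall>B lam. finite B \<and> card B = CARD('m) + n \<and> (\<forall>a\<in>B. 0 \<le> lam a \<and> lam a \<le> 1) \<and>
      (\<Sum>a\<in>B. lam a *\<^sub>R v a) = 0 \<and> (\<Sum>a\<in>B. lam a) = real n \<and> (\<forall>a\<in>B. \<forall>i. \<bar>v a $ i\<bar> \<le> D) \<longrightarrow>
      (\<exists>P. (\<forall>j\<le>card B. P j \<subseteq> B \<and> card (P j) = j \<and> (\<forall>i. \<bar>(\<Sum>a\<in>P j. v a) $ i\<bar> \<le> real CARD('m) * D))
         \<and> (\<forall>j<card B. P j \<subseteq> P (Suc j)))"
proof (induction n)
  case 0
  show ?case
  proof (intro allI impI)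
    fix B :: "'a set" and lam :: "'a \<Rightarrow> real"
    assume h: "finite B \<and> card B = CARD('m) + 0 \<and> (\<forall>a\<in>B. 0 \<le> lam a \<and> lam a \<le> 1) \<and>
      (\<Sum>a\<in>B. lam a *\<^sub>R v a) = 0 \<and> (\<Sum>a\<in>B. lam a) = real 0 \<and> (\<forall>a\<in>B. \<forall>i. \<bar>v a $ i\<bar> \<le> D)"
    have finB: "finite B" and cB: "card B = CARD('m)" and vb: "\<forall>a\<in>B. \<forall>i. \<bar>v a $ i\<bar> \<le> D"
      using h by auto
    obtain P where P: "\<forall>j\<le>card B. P j \<subseteq> B \<and> card (P j) = j" "\<forall>j<card B. P j \<subseteq> P (Suc j)"
      using generic_chain[OF finB] by blast
    have "\<forall>j\<le>card B. \<forall>i. \<bar>(\<Sum>a\<in>P j. v a) $ i\<bar> \<le> real CARD('m) * D"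
    proof (intro allI impI)
      fix j i assume j: "j \<le> card B"
      have sub: "P j \<subseteq> B" and cP: "card (P j) = j" using P(1) j by auto
      have fin: "finite (P j)" using sub finB finite_subset by blast
      have "\<bar>(\<Sum>a\<in>P j. v a) $ i\<bar> \<le> real (card (P j)) * D"
        using sub vb by (intro sum_comp_bound fin) blast
      also have "\<dots> \<le> real CARD('m) * D" using cP j cB D by (intro mult_right_mono) auto
      finally show "\<bar>(\<Sum>a\<in>P j. v a) $ i\<bar> \<le> real CARD('m) * D" .
    qed
    then show "\<exists>P. (\<forall>j\<le>card B. P j \<subseteq> B \<and> card (P j) = j \<and> (\<forall>i. \<bar>(\<Sum>a\<in>P j. v a) $ i\<bar> \<le> real CARD('m) * D))
         \<and> (\<forall>j<card B. P j \<subseteq> P (Suc j))" using P by (intro exI[of _ P]) simp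
  qed
next
  case (Suc n)
  show ?case
  proof (intro allI impI)
    fix B :: "'a set" and lam :: "'a \<Rightarrow> real"
    assume h: "finite B \<and> card B = CARD('m) + Suc n \<and> (\<forall>a\<in>B. 0 \<le> lam a \<and> lam a \<le> 1) \<and>
      (\<Sum>a\<in>B. lam a *\<^sub>R v a) = 0 \<and> (\<Sum>a\<in>B. lam a) = real (Suc n) \<and> (\<forall>a\<in>B. \<forall>i. \<bar>v a $ i\<bar> \<le> D)"
    have cB: "card B = Suc (CARD('m) + n)" using h by simp
    have finB: "finite B" and l01: "\<forall>a\<in>B. 0 \<le> lam a \<and> lam a \<le> 1" and lv: "(\<Sum>a\<in>B. lam a *\<^sub>R v a) = 0"
      and ls: "(\<Sum>a\<in>B. lam a) = real (Suc n)" and vb: "\<forall>a\<in>B. \<forall>i. \<bar>v a $ i\<bar> \<le> D"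
      using h by auto
    have ls': "(\<Sum>a\<in>B. lam a) = real (Suc (CARD('m) + n)) - real CARD('m)" using ls by simp
    obtain a lam' where a: "a \<in> B" "\<forall>b\<in>B-{a}. 0 \<le> lam' b \<and> lam' b \<le> 1"
      "(\<Sum>b\<in>B-{a}. lam' b *\<^sub>R v b) = 0" "(\<Sum>b\<in>B-{a}. lam' b) = real (CARD('m) + n) - real CARD('m)"
      using step[OF finB cB _ l01 lv ls'] by (meson le_add1)
    have cB': "card (B - {a}) = CARD('m) + n" using a(1) cB finB by simp
    have "finite (B - {a}) \<and> card (B - {a}) = CARD('m) + n \<and> (\<forall>b\<in>B-{a}. 0 \<le> lam' b \<and> lam' b \<le> 1) \<and>
      (\<Sum>b\<in>B-{a}. lam' b *\<^sub>R v b) = 0 \<and> (\<Sum>b\<in>B-{a}. lam' b) = real n \<and> (\<forall>b\<in>B-{a}. \<forall>i. \<bar>v b $ i\<bar> \<le> D)"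
      using finB cB' a vb by simp
    note hh = this
    obtain P where P: "\<forall>j\<le>card (B-{a}). P j \<subseteq> B-{a} \<and> card (P j) = j \<and> (\<forall>i. \<bar>(\<Sum>a\<in>P j. v a) $ i\<bar> \<le> real CARD('m) * D)"
         "\<forall>j<card (B-{a}). P j \<subseteq> P (Suc j)"
      using Suc.IH[rule_format, OF hh] by (elim exE conjE) (rule that)
    have top: "\<forall>i. \<bar>(\<Sum>a\<in>B. v a) $ i\<bar> \<le> real CARD('m) * D"
      using top_bound[OF finB l01 vb lv] cB ls by auto
    define P' where "P' = (\<lambda>j. if j = card B then B else P j)"
    show "\<exists>P. (\<forall>j\<le>card B. P j \<subseteq> B \<and> card (P j) = j \<and> (\<forall>i. \<bar>(\<Sum>a\<in>P j. v a) $ i\<bar> \<le> real CARD('m) * D))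
         \<and> (\<forall>j<card B. P j \<subseteq> P (Suc j))"
    proof (rule exI[of _ P'], rule conjI; intro allI impI)
      fix j assume j: "j \<le> card B"
      show "P' j \<subseteq> B \<and> card (P' j) = j \<and> (\<forall>i. \<bar>(\<Sum>a\<in>P' j. v a) $ i\<bar> \<le> real CARD('m) * D)"
      proof (cases "j = card B")
        case True
        then show ?thesis using top by (simp add: P'_def)
      next
        case False
        then have j': "j \<le> card (B - {a})" using j cB cB' by simp
        have "P' j = P j" using False by (simp add: P'_def)
        then show ?thesis using P(1) j' by auto
      qed
    next
      fix j assume j: "j < card B"
      show "P' j \<subseteq> P' (Suc j)"
      proof (cases "Suc j = card B")
        case True
        have "P' j = P j" using True by (simp add: P'_def)
        moreover have "P j \<subseteq> B" using P(1) True cB cB' by auto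
        ultimately show ?thesis using True by (simp add: P'_def)
      next
        case False
        have "P' j = P j" "P' (Suc j) = P (Suc j)" using False j by (auto simp: P'_def)
        moreover have "j < card (B - {a})" using False j cB cB' by simp
        ultimately show ?thesis using P(2) by simp
      qed
    qed
  qed
qed

theorem steinitz:
  fixes v :: "'a \<Rightarrow> real^'m::finite"
  assumes "finite A" "0 \<le> D" "\<forall>a\<in>A. \<forall>i. \<bar>v a $ i\<bar> \<le> D" "(\<Sum>a\<in>A. v a) = 0"
  shows "\<exists>P. (\<forall>j\<le>card A. P j \<subseteq> A \<and> card (P j) = j \<and> (\<forall>i. \<bar>(\<Sum>a\<in>P j. v a) $ i\<bar> \<le> real CARD('m) * D))
         \<and> (\<forall>j<card A. P j \<subseteq> P (Suc j))"
proof (cases "card A \<le> CARD('m)")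
  case True
  obtain P where P: "\<forall>j\<le>card A. P j \<subseteq> A \<and> card (P j) = j" "\<forall>j<card A. P j \<subseteq> P (Suc j)"
    using generic_chain[OF assms(1)] by blast
  have "\<forall>j\<le>card A. \<forall>i. \<bar>(\<Sum>a\<in>P j. v a) $ i\<bar> \<le> real CARD('m) * D"
  proof (intro allI impI)
    fix j i assume j: "j \<le> card A"
    have sub: "P j \<subseteq> A" and cP: "card (P j) = j" using P(1) j by auto
    have fin: "finite (P j)" using sub assms(1) finite_subset by blast
    have "\<bar>(\<Sum>a\<in>P j. v a) $ i\<bar> \<le> real (card (P j)) * D"
      using sub assms(3) by (intro sum_comp_bound fin) blast
    also have "\<dots> \<le> real CARD('m) * D" using cP j True assms(2) by (intro mult_right_mono) auto
    finally show "\<bar>(\<Sum>a\<in>P j. v a) $ i\<bar> \<le> real CARD('m) * D" .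
  qed
  then show ?thesis using P by (intro exI[of _ P]) simp
next
  case False
  define n where "n = card A - CARD('m)"
  have cA: "card A = CARD('m) + n" using False by (simp add: n_def)
  define lam where "lam = (\<lambda>a::'a. real n / real (card A))"
  have pos: "card A > 0" using False by simp
  have l01: "\<forall>a\<in>A. 0 \<le> lam a \<and> lam a \<le> 1" using cA pos by (auto simp: lam_def divide_le_eq_1)
  have lv: "(\<Sum>a\<in>A. lam a *\<^sub>R v a) = 0"
    using assms(4) by (simp add: lam_def scaleR_sum_right[symmetric])
  have ls: "(\<Sum>a\<in>A. lam a) = real n" using pos by (simp add: lam_def)
  have hh: "finite A \<and> card A = CARD('m) + n \<and> (\<forall>a\<in>A. 0 \<le> lam a \<and> lam a \<le> 1) \<and>
      (\<Sum>a\<in>A. lam a *\<^sub>R v a) = 0 \<and> (\<Sum>a\<in>A. lam a) = real n \<and> (\<forall>a\<in>A. \<forall>i. \<bar>v a $ i\<bar> \<le> D)"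
    using assms(1,3) cA l01 lv ls by simp
  show ?thesis using chain[OF assms(2), of n v, rule_format, OF hh] .
qed

definition piece :: "nat \<Rightarrow> int \<Rightarrow> nat \<Rightarrow> int" where
  "piece m e l = e div int m + (if int l < e mod int m then 1 else 0)"

lemma piece_sum:
  assumes "m > 0"
  shows "(\<Sum>l<m. piece m e l) = e"
proof -
  have mm: "0 \<le> e mod int m" "e mod int m < int m" using assms by auto
  have "(\<Sum>l<m. piece m e l) = (\<Sum>l<m. e div int m) + (\<Sum>l<m. (if int l < e mod int m then 1 else 0))"
    by (simp add: piece_def sum.distrib)
  also have "(\<Sum>l<m. (if int l < e mod int m then 1 else 0::int)) = int (card {l\<in>{..<m}. int l < e mod int m})"
    by (simp add: sum.If_cases Int_def)
  also have "{l\<in>{..<m}. int l < e mod int m} = {..<nat (e mod int m)}"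
    using mm by auto
  finally show ?thesis using mm by simp
qed

lemma piece_bound:
  assumes "m > 0" "\<bar>e\<bar> \<le> int m * D"
  shows "\<bar>piece m e l\<bar> \<le> D"
proof -
  have mm: "0 \<le> e mod int m" "e mod int m < int m" using assms by auto
  have ed: "e = int m * (e div int m) + e mod int m" by simp
  have lo: "- D \<le> e div int m"
  proof (rule ccontr)
    assume "\<not> ?thesis"
    then have "e div int m \<le> - D - 1" by simp
    then have "int m * (e div int m) \<le> int m * (- D - 1)" using assms(1) by (intro mult_left_mono) auto
    then have "int m * (e div int m) \<le> - (int m * D) - int m" by (simp add: algebra_simps)
    then have "e < - (int m * D)" using ed mm by linarith
    then show False using assms(2) by simp
  qed
  have hi: "e div int m \<le> D"
  proof (rule ccontr)
    assume "\<not> ?thesis"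
    then have "D + 1 \<le> e div int m" by simp
    then have "int m * (D + 1) \<le> int m * (e div int m)" using assms(1) by (intro mult_left_mono) auto
    then have "int m * D + int m \<le> int m * (e div int m)" by (simp add: algebra_simps)
    then have "e > int m * D" using ed mm by linarith
    then show False using assms(2) by simp
  qed
  have hi2: "e div int m = D \<Longrightarrow> e mod int m = 0"
  proof -
    assume "e div int m = D"
    then have "e = int m * D + e mod int m" using ed by simp
    then show "e mod int m = 0" using assms(2) mm by simp
  qed
  show ?thesis using lo hi hi2 mm by (cases "e div int m = D") (auto simp: piece_def abs_le_iff)
qed


lemma combo:
  fixes u :: "'a \<Rightarrow> 'm::finite \<Rightarrow> int" and b :: "'m \<Rightarrow> real" and D :: int
  assumes finI: "finite I" and D1: "1 \<le> D"
    and ub: "\<forall>j\<in>I. \<forall>i. \<bar>u j i\<bar> \<le> D"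
    and close: "\<forall>i. \<bar>real_of_int (\<Sum>j\<in>I. u j i) - b i\<bar> \<le> real CARD('m) * real_of_int D"
    and big: "(CARD('m)+1) * nat (2 * int CARD('m) * D + 1) ^ CARD('m) \<le> card I + CARD('m)"
  shows "\<exists>S\<subseteq>I. S \<noteq> {} \<and> (\<forall>i. (0 \<le> real_of_int (\<Sum>j\<in>S. u j i) \<and> real_of_int (\<Sum>j\<in>S. u j i) \<le> b i)
            \<or> (b i \<le> real_of_int (\<Sum>j\<in>S. u j i) \<and> real_of_int (\<Sum>j\<in>S. u j i) \<le> 0))"
proof -
  define m where "m = CARD('m)"
  have m0: "m > 0" by (simp add: m_def)
  define sg :: "'m \<Rightarrow> int" where "sg = (\<lambda>i. if b i > 0 then 1 else if b i < 0 then -1 else 0)"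
  define nn :: "'m \<Rightarrow> nat" where "nn = (\<lambda>i. nat \<lfloor>\<bar>b i\<bar>\<rfloor>)"
  define c where "c = (\<lambda>i. \<Sum>j\<in>I. u j i)"
  define e where "e = (\<lambda>i. c i - sg i * int (nn i))"
  have nn_le: "real (nn i) \<le> \<bar>b i\<bar>" for i
    by (simp add: nn_def)
  have nn_gt: "\<bar>b i\<bar> < real (nn i) + 1" for i
    by (simp add: nn_def)
  have s_close: "\<bar>b i - real_of_int (sg i * int (nn i))\<bar> < 1" for i
    using nn_le[of i] nn_gt[of i] by (auto simp: sg_def abs_if split: if_splits)
  have e_bound: "\<bar>e i\<bar> \<le> int m * D" for i
  proof -
    have "\<bar>real_of_int (e i)\<bar> < real m * real_of_int D + 1"
      using close[rule_format, of i] s_close[of i] by (simp add: e_def c_def m_def)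
    then have "real_of_int \<bar>e i\<bar> < real_of_int (int m * D + 1)" by simp
    then have "\<bar>e i\<bar> < int m * D + 1" by (simp only: of_int_less_iff)
    then show ?thesis by simp
  qed
  have nn0: "sg i = 0 \<Longrightarrow> nn i = 0" for i
    by (auto simp: sg_def nn_def split: if_splits)
  define U where "U = Sigma UNIV (\<lambda>i. {..<nn i})"
  define J :: "('a + ('m \<times> nat) + nat) set" where "J = Inr ` Inr ` {..<m}"
  define A where "A = Inl ` I \<union> Inr ` Inl ` U \<union> J"
  define w :: "('a + ('m \<times> nat) + nat) \<Rightarrow> 'm \<Rightarrow> int" where "w = (\<lambda>x. case x of Inl j \<Rightarrow> u j
      | Inr (Inl p) \<Rightarrow> (\<lambda>i. if i = fst p then - sg i else 0) | Inr (Inr l) \<Rightarrow> (\<lambda>i. - piece m (e i) l))"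
  define v where "v = (\<lambda>x. \<chi> i. real_of_int (w x i))"
  have finU: "finite U" by (simp add: U_def)
  have finA: "finite A" using finI finU by (simp add: A_def J_def)
  have split_sum: "(\<Sum>x\<in>Inl ` S \<union> Inr ` Inl ` V. w x i) = (\<Sum>j\<in>S. u j i) - sg i * int (card {p\<in>V. fst p = i})"
    if "finite S" "finite V" for S V i
  proof -
    have "(\<Sum>x\<in>Inl ` S \<union> Inr ` Inl ` V. w x i) = (\<Sum>x\<in>Inl ` S. w x i) + (\<Sum>x\<in>Inr ` Inl ` V. w x i)"
      using that by (intro sum.union_disjoint) auto
    also have "(\<Sum>x\<in>Inl ` S. w x i) = (\<Sum>j\<in>S. u j i)"
      by (simp add: sum.reindex w_def)
    also have "(\<Sum>x\<in>Inr ` Inl ` V. w x i) = (\<Sum>p\<in>V. if i = fst p then - sg i else 0)"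
      by (simp add: sum.reindex inj_on_def image_image w_def)
    also have "\<dots> = (\<Sum>p\<in>V. - sg i * (if fst p = i then 1 else 0))"
      by (intro sum.cong) auto
    also have "\<dots> = - sg i * (\<Sum>p\<in>V. if fst p = i then 1 else 0)"
      by (simp add: sum_distrib_left)
    also have "(\<Sum>p\<in>V. if fst p = i then 1 else 0::int) = int (card {p\<in>V. fst p = i})"
      using that by (simp add: sum.If_cases Int_def)
    finally show ?thesis by simp
  qed
  have wb: "\<forall>x\<in>A. \<forall>i. \<bar>w x i\<bar> \<le> D"
    using ub D1 piece_bound[OF m0 e_bound] by (auto simp: A_def J_def w_def sg_def)
  have vb: "\<forall>x\<in>A. \<forall>i. \<bar>v x $ i\<bar> \<le> real_of_int D"
  proof (intro ballI allI)
    fix x i assume "x \<in> A"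
    then have "\<bar>w x i\<bar> \<le> D" using wb by blast
    then have "real_of_int \<bar>w x i\<bar> \<le> real_of_int D" by (simp only: of_int_le_iff)
    then show "\<bar>v x $ i\<bar> \<le> real_of_int D" by (simp add: v_def)
  qed
  have wsum: "(\<Sum>x\<in>A. w x i) = 0" for i
  proof -
    have "(\<Sum>x\<in>A. w x i) = (\<Sum>x\<in>Inl ` I \<union> Inr ` Inl ` U. w x i) + (\<Sum>x\<in>J. w x i)"
      unfolding A_def using finI finU by (intro sum.union_disjoint) (auto simp: J_def)
    also have "(\<Sum>x\<in>J. w x i) = - (\<Sum>l<m. piece m (e i) l)"
      by (simp add: J_def sum.reindex inj_on_def image_image w_def sum_negf)
    also have "\<dots> = - e i" using piece_sum[OF m0] by simp
    also have "{p\<in>U. fst p = i} = {i} \<times> {..<nn i}" by (auto simp: U_def)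
    then have "card {p\<in>U. fst p = i} = nn i" by (simp add: card_cartesian_product)
    then have "(\<Sum>x\<in>Inl ` I \<union> Inr ` Inl ` U. w x i) = c i - sg i * int (nn i)"
      using split_sum[OF finI finU, of i] by (simp add: c_def)
    finally show ?thesis by (simp add: e_def)
  qed
  have vsum: "(\<Sum>x\<in>A. v x) = 0"
  proof -
    have "(\<Sum>x\<in>A. real_of_int (w x i)) = 0" for i
      using wsum[of i] by (metis of_int_0 of_int_sum)
    then show ?thesis by (simp add: v_def vec_eq_iff)
  qed
  have D0: "0 \<le> real_of_int D" using D1 by simp
  obtain P where P1: "\<forall>j\<le>card A. P j \<subseteq> A \<and> card (P j) = j \<and> (\<forall>i. \<bar>(\<Sum>a\<in>P j. v a) $ i\<bar> \<le> real CARD('m) * real_of_int D)"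
      and P2: "\<forall>j<card A. P j \<subseteq> P (Suc j)"
    using steinitz[OF finA D0 vb vsum] by (elim exE conjE) (rule that)
  have mono: "P k \<subseteq> P l" if "k \<le> l" "l \<le> card A" for k l
    using that
  proof (induction l)
    case 0
    then show ?case by simp
  next
    case (Suc l)
    show ?case
    proof (cases "k = Suc l")
      case True
      then show ?thesis by simp
    next
      case False
      then have "P k \<subseteq> P l" using Suc by simp
      moreover have "P l \<subseteq> P (Suc l)" using P2 Suc.prems by simp
      ultimately show ?thesis by blast
    qed
  qed
  have cardA: "card I + m \<le> card A"
  proof -
    have disj: "Inl ` I \<inter> J = {}" by (auto simp: J_def)
    have "card (Inl ` I \<union> J) = card (Inl ` I :: ('a + ('m \<times> nat) + nat) set) + card J"
      using card_Un_disjoint[OF _ _ disj] finI by (simp add: J_def)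
    also have "card (Inl ` I :: ('a + ('m \<times> nat) + nat) set) = card I" by (simp add: card_image)
    also have "card J = m" by (simp add: J_def card_image)
    finally have "card (Inl ` I \<union> J) = card I + m" .
    moreover have "card (Inl ` I \<union> J) \<le> card A" using finA by (intro card_mono) (auto simp: A_def)
    ultimately show ?thesis by simp
  qed
  define B where "B = int m * D"
  define K where "K = {0..m} \<times> (PiE UNIV (\<lambda>_::'m. {-B..B}))"
  define phi where "phi = (\<lambda>k. (card (P k \<inter> J), (\<lambda>i. \<Sum>x\<in>P k. w x i)))"
  have img: "phi ` {0..card A} \<subseteq> K"
  proof
    fix y assume "y \<in> phi ` {0..card A}"
    then obtain k where k: "k \<le> card A" "y = phi k" by auto
    have sub: "P k \<subseteq> A" using P1 k by simp
    have "card (P k \<inter> J) \<le> card J" using finA by (intro card_mono) (auto simp: J_def)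
    also have "card J = m" by (simp add: J_def card_image)
    finally have c1: "card (P k \<inter> J) \<le> m" .
    have c2: "(\<Sum>x\<in>P k. w x i) \<in> {-B..B}" for i
    proof -
      have "\<bar>(\<Sum>a\<in>P k. v a) $ i\<bar> \<le> real CARD('m) * real_of_int D" using P1 k by simp
      moreover have "(\<Sum>a\<in>P k. v a) $ i = real_of_int (\<Sum>x\<in>P k. w x i)" by (simp add: v_def)
      ultimately have "real_of_int \<bar>\<Sum>x\<in>P k. w x i\<bar> \<le> real_of_int B" by (simp add: B_def m_def)
      then have "\<bar>\<Sum>x\<in>P k. w x i\<bar> \<le> B" by (simp only: of_int_le_iff)
      then show ?thesis by (simp add: abs_le_iff)
    qed
    show "y \<in> K" using k c1 c2 by (simp add: K_def phi_def PiE_iff)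
  qed
  have cardK: "card K = (m+1) * nat (2*B+1)^m"
  proof -
    have "card (PiE UNIV (\<lambda>_::'m. {-B..B})) = nat (2*B+1)^m"
      by (simp add: card_PiE m_def)
    then show ?thesis by (simp add: K_def card_cartesian_product)
  qed
  have "\<not> inj_on phi {0..card A}"
  proof
    assume inj: "inj_on phi {0..card A}"
    have "card {0..card A} \<le> card K"
      using card_inj_on_le[OF inj img] by (simp add: K_def finite_PiE)
    then have "card A + 1 \<le> (m+1) * nat (2*B+1)^m" using cardK by simp
    then show False using big cardA by (simp add: B_def m_def mult.assoc)
  qed
  then obtain k0 l0 where kl0: "k0 \<le> card A" "l0 \<le> card A" "k0 \<noteq> l0" "phi k0 = phi l0"
    by (auto simp: inj_on_def)
  obtain k l where kl: "k < l" "l \<le> card A" "phi k = phi l"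
  proof (cases "k0 < l0")
    case True
    then show ?thesis using kl0 that by blast
  next
    case False
    then have "l0 < k0" using kl0 by simp
    then show ?thesis using kl0 that[of l0 k0] by simp
  qed
  have sub: "P k \<subseteq> P l" using mono kl by simp
  have PlA: "P l \<subseteq> A" using P1 kl by simp
  have finPl: "finite (P l)" using PlA finA finite_subset by blast
  have finPk: "finite (P k)" using sub finPl finite_subset by blast
  define Q where "Q = P l - P k"
  have cPl: "card (P l) = l" using P1 kl by simp
  have cPk: "card (P k) = k" using P1 kl by simp
  have cQ: "card Q = l - k" unfolding Q_def using card_Diff_subset[OF finPk sub] cPl cPk by simp
  have Qne: "Q \<noteq> {}" using cQ kl by auto
  have QJ: "Q \<inter> J = {}"
  proof -
    have "card (P k \<inter> J) = card (P l \<inter> J)" using kl(3) by (simp add: phi_def)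
    moreover have "P k \<inter> J \<subseteq> P l \<inter> J" using sub by blast
    moreover have "finite (P l \<inter> J)" using finPl by simp
    ultimately have "P k \<inter> J = P l \<inter> J" by (metis card_subset_eq)
    then show ?thesis by (auto simp: Q_def)
  qed
  have Qsum: "(\<Sum>x\<in>Q. w x i) = 0" for i
  proof -
    have "(\<Sum>x\<in>Q. w x i) = (\<Sum>x\<in>P l. w x i) - (\<Sum>x\<in>P k. w x i)"
      unfolding Q_def using finPl sub by (rule sum_diff)
    moreover have "(\<Sum>x\<in>P l. w x i) = (\<Sum>x\<in>P k. w x i)"
      using kl(3) by (simp add: phi_def fun_eq_iff)
    ultimately show ?thesis by simp
  qed
  define S where "S = {j\<in>I. Inl j \<in> Q}"
  define V where "V = {p\<in>U. Inr (Inl p) \<in> Q}"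
  have QA: "Q \<subseteq> A" using PlA by (auto simp: Q_def)
  have QSV: "Q = Inl ` S \<union> Inr ` Inl ` V"
  proof
    show "Q \<subseteq> Inl ` S \<union> Inr ` Inl ` V"
    proof
      fix x assume x: "x \<in> Q"
      then have "x \<in> A" "x \<notin> J" using QA QJ by auto
      then show "x \<in> Inl ` S \<union> Inr ` Inl ` V" using x by (auto simp: A_def S_def V_def)
    qed
  next
    show "Inl ` S \<union> Inr ` Inl ` V \<subseteq> Q" by (auto simp: S_def V_def)
  qed
  have finS: "finite S" using finI by (simp add: S_def)
  have finV: "finite V" using finU by (simp add: V_def)
  have key: "(\<Sum>j\<in>S. u j i) = sg i * int (card {p\<in>V. fst p = i})" for i
    using split_sum[OF finS finV, of i] Qsum[of i] QSV by simp
  have cardVi: "card {p\<in>V. fst p = i} \<le> nn i" for i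
  proof -
    have "{p\<in>V. fst p = i} \<subseteq> {i} \<times> {..<nn i}" by (auto simp: V_def U_def)
    then have "card {p\<in>V. fst p = i} \<le> card ({i} \<times> {..<nn i})" by (intro card_mono) auto
    then show ?thesis by (simp add: card_cartesian_product)
  qed
  show ?thesis
  proof (intro exI[of _ S] conjI allI)
    show "S \<subseteq> I" by (auto simp: S_def)
  next
    show "S \<noteq> {}"
    proof
      assume S0: "S = {}"
      have "V = {}"
      proof (rule ccontr)
        assume "V \<noteq> {}"
        then obtain p where p: "p \<in> V" by blast
        then have "snd p < nn (fst p)" by (auto simp: V_def U_def)
        then have sgp: "sg (fst p) \<noteq> 0" using nn0 by fastforce
        have "sg (fst p) * int (card {q\<in>V. fst q = fst p}) = 0" using key[of "fst p"] S0 by simp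
        then have "card {q\<in>V. fst q = fst p} = 0" using sgp by simp
        moreover have "p \<in> {q\<in>V. fst q = fst p}" using p by simp
        moreover have "finite {q\<in>V. fst q = fst p}" using finV by simp
        ultimately show False by (metis card_0_eq empty_iff)
      qed
      then show False using QSV S0 Qne by simp
    qed
  next
    fix i
    let ?t = "real_of_int (\<Sum>j\<in>S. u j i)"
    have t: "?t = real_of_int (sg i) * real (card {p\<in>V. fst p = i})" using key[of i] by simp
    have cv: "real (card {p\<in>V. fst p = i}) \<le> \<bar>b i\<bar>" using cardVi[of i] nn_le[of i] by linarith
    show "(0 \<le> ?t \<and> ?t \<le> b i) \<or> (b i \<le> ?t \<and> ?t \<le> 0)"
    proof (cases "b i > 0")
      case True
      then show ?thesis using t cv by (simp add: sg_def)
    next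
      case False
      note F = False
      show ?thesis
      proof (cases "b i < 0")
        case True
        then show ?thesis using t cv F by (simp add: sg_def)
      next
        case False
        then show ?thesis using t F by (simp add: sg_def)
      qed
    qed
  qed
qed

lemma convex_exchange:
  fixes g :: "real \<Rightarrow> real"
  assumes cv: "convex_on UNIV g" and t: "(0 \<le> t \<and> t \<le> q - p) \<or> (q - p \<le> t \<and> t \<le> 0)"
  shows "g (p + t) + g (q - t) \<le> g p + g q"
proof (cases "p = q")
  case True
  then have "t = 0" using t by auto
  then show ?thesis by simp
next
  case False
  define lam where "lam = t / (q - p)"
  have l01: "0 \<le> lam \<and> lam \<le> 1"
  proof (cases "0 \<le> t \<and> t \<le> q - p")
    case True
    then have "q - p > 0" using False by auto
    then show ?thesis using True by (simp add: lam_def divide_le_eq_1)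
  next
    case False2: False
    then have tt: "q - p \<le> t" "t \<le> 0" using t by auto
    then have "q - p < 0" using False by auto
    then show ?thesis using tt by (simp add: lam_def divide_le_eq_1 divide_nonpos_neg)
  qed
  have qp: "q - p \<noteq> 0" using False by simp
  have lt: "lam * (q - p) = t" using qp by (simp add: lam_def)
  have "(1 - lam) *\<^sub>R p + lam *\<^sub>R q = p + lam * (q - p)" by (simp add: algebra_simps)
  then have e1: "p + t = (1 - lam) *\<^sub>R p + lam *\<^sub>R q" using lt by simp
  have "(1 - (1 - lam)) *\<^sub>R p + (1 - lam) *\<^sub>R q = q - lam * (q - p)" by (simp add: algebra_simps)
  then have e2: "q - t = (1 - (1 - lam)) *\<^sub>R p + (1 - lam) *\<^sub>R q" using lt by simp
  have i1: "g ((1 - lam) *\<^sub>R p + lam *\<^sub>R q) \<le> (1 - lam) * g p + lam * g q"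
    using convex_onD[OF cv] l01 by simp
  have i2: "g ((1 - (1 - lam)) *\<^sub>R p + (1 - lam) *\<^sub>R q) \<le> (1 - (1 - lam)) * g p + (1 - lam) * g q"
    using convex_onD[OF cv, of "1 - lam"] l01 by simp
  have j1: "g (p + t) \<le> (1 - lam) * g p + lam * g q" by (subst e1) (rule i1)
  have j2: "g (q - t) \<le> (1 - (1 - lam)) * g p + (1 - lam) * g q" by (subst e2) (rule i2)
  show ?thesis using j1 j2 by (simp add: algebra_simps)
qed

theorem mainTheorem6:
  fixes g :: "'m::finite \<Rightarrow> real \<Rightarrow> real"
    and W :: "int ^ 'n::finite ^ 'm"
    and f :: "real ^ 'n \<Rightarrow> real"
    and xstar :: "real ^ 'n"
  assumes convex: "\<And>i. convex_on UNIV (g i)"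
    and f_def: "\<And>x. f x = (\<Sum>i\<in>UNIV. g i (int_mat_vec W x $ i))"
    and xmin: "is_minimizer_on f unit_cube xstar"
    and frac: "card (fractional_entries xstar) \<le> CARD('m)"
  shows "\<exists>zstar. is_minimizer_on f binary_vecs zstar \<and>
           l1_dist xstar zstar \<le>
             2 * real CARD('m) * (2 * real CARD('m) * real_of_int (max_abs_entry W) + 1) ^ CARD('m)"
proof -
  define m where "m = CARD('m)"
  define Dl where "Dl = max_abs_entry W"
  have Wb: "\<bar>W $ i $ j\<bar> \<le> Dl" for i j
  proof -
    have "{\<bar>W $ i $ j\<bar> |i j. True} = (\<lambda>(i,j). \<bar>W $ i $ j\<bar>) ` UNIV" by auto
    then have "finite {\<bar>W $ i $ j\<bar> |i j. True}" by simp
    then show ?thesis unfolding Dl_def max_abs_entry_def by (rule Max_ge) auto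
  qed
  have Dl0: "0 \<le> Dl" using Wb[of undefined undefined] by linarith
  have finB: "finite (binary_vecs :: (real^'n) set)"
  proof -
    have "binary_vecs \<subseteq> (\<lambda>h. \<chi> j. if h j then 1 else 0) ` (UNIV :: ('n \<Rightarrow> bool) set)"
    proof
      fix x :: "real^'n" assume "x \<in> binary_vecs"
      then have "x = (\<chi> j. if x $ j = 1 then 1 else 0)" by (auto simp: binary_vecs_def vec_eq_iff)
      then show "x \<in> (\<lambda>h. \<chi> j. if h j then 1 else 0) ` UNIV"
        by (intro image_eqI[where x="\<lambda>j. x $ j = 1"]) simp_all
    qed
    then show ?thesis by (rule finite_subset) simp
  qed
  have neB: "binary_vecs \<noteq> {}" by (auto simp: binary_vecs_def intro!: exI[of _ 0])
  define z0 where "z0 = arg_min_on f binary_vecs"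
  have z0: "is_minimizer_on f binary_vecs z0"
    using arg_min_if_finite[OF finB neB, of f] by (auto simp: z0_def is_minimizer_on_def not_less)
  define M where "M = {z \<in> binary_vecs. is_minimizer_on f binary_vecs z}"
  have finM: "finite M" using finB by (simp add: M_def)
  have neM: "M \<noteq> {}" using z0 by (auto simp: M_def is_minimizer_on_def)
  define zs where "zs = arg_min_on (l1_dist xstar) M"
  have zsM: "zs \<in> M" and zsmin: "\<not>(\<exists>z\<in>M. l1_dist xstar z < l1_dist xstar zs)"
    using arg_min_if_finite[OF finM neM, of "l1_dist xstar"] by (auto simp: zs_def)
  have zsB: "zs \<in> binary_vecs" and zsopt: "\<forall>y\<in>binary_vecs. f zs \<le> f y"
    using zsM by (auto simp: M_def is_minimizer_on_def)
  have xs01: "0 \<le> xstar $ j \<and> xstar $ j \<le> 1" for j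
    using xmin by (auto simp: is_minimizer_on_def unit_cube_def)
  have xsopt: "\<forall>y\<in>unit_cube. f xstar \<le> f y" using xmin by (simp add: is_minimizer_on_def)
  have zs01: "zs $ j = 0 \<or> zs $ j = 1" for j
    using zsB by (auto simp: binary_vecs_def)
  show ?thesis
  proof (intro exI[of _ zs] conjI)
    show "is_minimizer_on f binary_vecs zs" using zsM by (simp add: M_def)
  next
    show "l1_dist xstar zs \<le> 2 * real CARD('m) * (2 * real CARD('m) * real_of_int (max_abs_entry W) + 1) ^ CARD('m)"
    proof (rule ccontr)
      assume far0: "\<not> ?thesis"
      define K where "K = (2 * real m * real_of_int Dl + 1) ^ m"
      have far: "2 * real m * K < l1_dist xstar zs" using far0 by (simp add: K_def m_def Dl_def)
      define F where "F = fractional_entries xstar"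
      define I where "I = {j. j \<notin> F \<and> xstar $ j \<noteq> zs $ j}"
      have finI: "finite I" by simp
      have xI: "xstar $ j = 0 \<or> xstar $ j = 1" if "j \<in> I" for j
        using that by (auto simp: I_def F_def fractional_entries_def)
      define d :: "'n \<Rightarrow> int" where "d = (\<lambda>j. if xstar $ j = 1 then 1 else -1)"
      have dI: "xstar $ j - zs $ j = real_of_int (d j)" if "j \<in> I" for j
        using xI[OF that] zs01[of j] that by (auto simp: d_def I_def)
      have diff0: "xstar $ j - zs $ j = 0" if "j \<notin> I" "j \<notin> F" for j
        using that by (auto simp: I_def)
      have absle: "\<bar>xstar $ j - zs $ j\<bar> \<le> 1" for j
        using xs01[of j] zs01[of j] by auto
      have dist_le: "l1_dist xstar zs \<le> real (card I) + real m"
      proof -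
        have "l1_dist xstar zs \<le> (\<Sum>j\<in>UNIV. if j \<in> I \<union> F then 1 else 0)"
          unfolding l1_dist_def using absle diff0 by (intro sum_mono) auto
        also have "\<dots> = real (card (I \<union> F))" by (simp add: sum.If_cases Collect_disj_eq)
        also have "card (I \<union> F) \<le> card I + card F" by (rule card_Un_le)
        also have "card F \<le> m" using frac by (simp add: F_def m_def)
        finally show ?thesis by simp
      qed
      have K0: "K \<ge> 1" unfolding K_def using Dl0 by (intro one_le_power) simp
      have m1: "m \<ge> 1" by (simp add: m_def)
      define b where "b = (\<lambda>i. \<Sum>j\<in>UNIV. real_of_int (W $ i $ j) * (xstar $ j - zs $ j))"
      have "\<exists>S\<subseteq>I. S \<noteq> {} \<and> (\<forall>i. (0 \<le> (\<Sum>j\<in>S. real_of_int (W $ i $ j) * (xstar $ j - zs $ j)) \<and>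
               (\<Sum>j\<in>S. real_of_int (W $ i $ j) * (xstar $ j - zs $ j)) \<le> b i) \<or>
            (b i \<le> (\<Sum>j\<in>S. real_of_int (W $ i $ j) * (xstar $ j - zs $ j)) \<and>
               (\<Sum>j\<in>S. real_of_int (W $ i $ j) * (xstar $ j - zs $ j)) \<le> 0))"
      proof (cases "Dl = 0")
        case True
        then have W0: "W $ i $ j = 0" for i j using Wb[of i j] by simp
        have "real (card I) + real m > 2 * real m" using far dist_le K0 m1
        proof -
          have "2 * real m * 1 \<le> 2 * real m * K" by (rule mult_left_mono) (use K0 in auto)
          then show ?thesis using far dist_le by linarith
        qed
        then have "card I > 0" using m1 by simp
        then obtain j where j: "j \<in> I" by (metis card_gt_0_iff ex_in_conv)
        show ?thesis
          by (rule exI[of _ "{j}"]) (use j W0 in auto)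
      next
        case False
        then have D1: "1 \<le> Dl" using Dl0 by simp
        define u where "u = (\<lambda>j i. d j * W $ i $ j)"
        have ub: "\<forall>j\<in>I. \<forall>i. \<bar>u j i\<bar> \<le> Dl" using Wb by (auto simp: u_def d_def)
        have ureal: "real_of_int (\<Sum>j\<in>S. u j i) = (\<Sum>j\<in>S. real_of_int (W $ i $ j) * (xstar $ j - zs $ j))"
          if "S \<subseteq> I" for S i
          using dI that by (auto simp: u_def intro!: sum.cong)
        have close: "\<forall>i. \<bar>real_of_int (\<Sum>j\<in>I. u j i) - b i\<bar> \<le> real CARD('m) * real_of_int Dl"
        proof
          fix i
          have "b i = (\<Sum>j\<in>I \<union> F. real_of_int (W $ i $ j) * (xstar $ j - zs $ j))"
            unfolding b_def using diff0 by (intro sum.mono_neutral_right) auto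
          also have "\<dots> = (\<Sum>j\<in>I. real_of_int (W $ i $ j) * (xstar $ j - zs $ j)) +
                (\<Sum>j\<in>F - I. real_of_int (W $ i $ j) * (xstar $ j - zs $ j))"
            by (subst Un_Diff_cancel[symmetric], rule sum.union_disjoint) auto
          finally have "real_of_int (\<Sum>j\<in>I. u j i) - b i = - (\<Sum>j\<in>F - I. real_of_int (W $ i $ j) * (xstar $ j - zs $ j))"
            using ureal[of I i] by simp
          then have "\<bar>real_of_int (\<Sum>j\<in>I. u j i) - b i\<bar> = \<bar>\<Sum>j\<in>F - I. real_of_int (W $ i $ j) * (xstar $ j - zs $ j)\<bar>"
            by simp
          also have "\<dots> \<le> (\<Sum>j\<in>F - I. \<bar>real_of_int (W $ i $ j) * (xstar $ j - zs $ j)\<bar>)" by (rule sum_abs)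
          also have "\<dots> \<le> (\<Sum>j\<in>F - I. real_of_int Dl)"
          proof (intro sum_mono)
            fix j
            have "\<bar>real_of_int (W $ i $ j)\<bar> \<le> real_of_int Dl" using Wb[of i j] by linarith
            then show "\<bar>real_of_int (W $ i $ j) * (xstar $ j - zs $ j)\<bar> \<le> real_of_int Dl"
            proof -
              have "\<bar>real_of_int (W $ i $ j)\<bar> * \<bar>xstar $ j - zs $ j\<bar> \<le> real_of_int Dl * 1"
                by (rule mult_mono) (use absle[of j] Dl0 \<open>\<bar>real_of_int (W $ i $ j)\<bar> \<le> real_of_int Dl\<close> in auto)
              then show ?thesis by (simp add: abs_mult)
            qed
          qed
          also have "\<dots> = real (card (F - I)) * real_of_int Dl" by simp
          also have "\<dots> \<le> real CARD('m) * real_of_int Dl"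
          proof -
            have "card (F - I) \<le> card F" by (rule card_mono) auto
            then have "card (F - I) \<le> CARD('m)" using frac by (simp add: F_def)
            then show ?thesis using Dl0 by (intro mult_right_mono) auto
          qed
          finally show "\<bar>real_of_int (\<Sum>j\<in>I. u j i) - b i\<bar> \<le> real CARD('m) * real_of_int Dl" .
        qed
        have big: "(CARD('m)+1) * nat (2 * int CARD('m) * Dl + 1) ^ CARD('m) \<le> card I + CARD('m)"
        proof -
          have "real (nat (2 * int m * Dl + 1)) = 2 * real m * real_of_int Dl + 1" using Dl0 by simp
          then have rK: "real (nat (2 * int m * Dl + 1) ^ m) = K" by (simp add: K_def)
          have "real ((m+1) * nat (2 * int m * Dl + 1) ^ m) = (real m + 1) * K" using rK by (simp add: algebra_simps)
          also have "\<dots> \<le> 2 * real m * K" using K0 m1 by (simp add: algebra_simps)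
          also have "\<dots> < real (card I + m)" using far dist_le by simp
          finally have "real ((m+1) * nat (2 * int m * Dl + 1) ^ m) < real (card I + m)" .
          then have "(m+1) * nat (2 * int m * Dl + 1) ^ m < card I + m" by (simp only: of_nat_less_iff)
          then show ?thesis by (simp add: m_def)
        qed
        obtain S where S: "S \<subseteq> I" "S \<noteq> {}" "\<forall>i. (0 \<le> real_of_int (\<Sum>j\<in>S. u j i) \<and> real_of_int (\<Sum>j\<in>S. u j i) \<le> b i)
            \<or> (b i \<le> real_of_int (\<Sum>j\<in>S. u j i) \<and> real_of_int (\<Sum>j\<in>S. u j i) \<le> 0)"
          using combo[OF finI D1 ub close big] by (elim exE conjE) (rule that)
        show ?thesis using S ureal[OF S(1)] by (intro exI[of _ S]) auto
      qed
      then obtain S where S: "S \<subseteq> I" "S \<noteq> {}" and Sb: "\<forall>i. (0 \<le> (\<Sum>j\<in>S. real_of_int (W $ i $ j) * (xstar $ j - zs $ j)) \<and>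
               (\<Sum>j\<in>S. real_of_int (W $ i $ j) * (xstar $ j - zs $ j)) \<le> b i) \<or>
            (b i \<le> (\<Sum>j\<in>S. real_of_int (W $ i $ j) * (xstar $ j - zs $ j)) \<and>
               (\<Sum>j\<in>S. real_of_int (W $ i $ j) * (xstar $ j - zs $ j)) \<le> 0)"
        by blast
      define t where "t = (\<lambda>i. \<Sum>j\<in>S. real_of_int (W $ i $ j) * (xstar $ j - zs $ j))"
      define z' where "z' = (\<chi> j. if j \<in> S then xstar $ j else zs $ j)"
      define x' where "x' = (\<chi> j. if j \<in> S then zs $ j else xstar $ j)"
      have z'B: "z' \<in> binary_vecs"
        using xI zs01 S(1) by (auto simp: z'_def binary_vecs_def)
      have x'C: "x' \<in> unit_cube"
        using xs01 zs01 by (auto simp: x'_def unit_cube_def) (metis order.refl zero_le_one)+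
      have Wz': "int_mat_vec W z' $ i = int_mat_vec W zs $ i + t i" for i
      proof -
        have "int_mat_vec W z' $ i - int_mat_vec W zs $ i = (\<Sum>j\<in>UNIV. real_of_int (W $ i $ j) * (z' $ j - zs $ j))"
          by (simp add: int_mat_vec_def sum_subtractf[symmetric] algebra_simps)
        also have "\<dots> = (\<Sum>j\<in>UNIV. if j \<in> S then real_of_int (W $ i $ j) * (xstar $ j - zs $ j) else 0)"
          by (intro sum.cong) (auto simp: z'_def)
        also have "\<dots> = t i" by (simp add: sum.If_cases t_def Int_def)
        finally show ?thesis by simp
      qed
      have Wx': "int_mat_vec W x' $ i = int_mat_vec W xstar $ i - t i" for i
      proof -
        have "int_mat_vec W xstar $ i - int_mat_vec W x' $ i = (\<Sum>j\<in>UNIV. real_of_int (W $ i $ j) * (xstar $ j - x' $ j))"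
          by (simp add: int_mat_vec_def sum_subtractf[symmetric] algebra_simps)
        also have "\<dots> = (\<Sum>j\<in>UNIV. if j \<in> S then real_of_int (W $ i $ j) * (xstar $ j - zs $ j) else 0)"
          by (intro sum.cong) (auto simp: x'_def)
        also have "\<dots> = t i" by (simp add: sum.If_cases t_def Int_def)
        finally show ?thesis by simp
      qed
      have bdiff: "b i = int_mat_vec W xstar $ i - int_mat_vec W zs $ i" for i
        by (simp add: b_def int_mat_vec_def sum_subtractf[symmetric] algebra_simps)
      have exch: "f z' + f x' \<le> f zs + f xstar"
      proof -
        have "f z' + f x' = (\<Sum>i\<in>UNIV. g i (int_mat_vec W zs $ i + t i) + g i (int_mat_vec W xstar $ i - t i))"
          by (simp add: f_def Wz' Wx' sum.distrib)
        also have "\<dots> \<le> (\<Sum>i\<in>UNIV. g i (int_mat_vec W zs $ i) + g i (int_mat_vec W xstar $ i))"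
        proof (intro sum_mono)
          fix i
          show "g i (int_mat_vec W zs $ i + t i) + g i (int_mat_vec W xstar $ i - t i)
              \<le> g i (int_mat_vec W zs $ i) + g i (int_mat_vec W xstar $ i)"
            using convex_exchange[OF convex[of i], of "t i" "int_mat_vec W xstar $ i" "int_mat_vec W zs $ i"]
              Sb[rule_format, of i] bdiff[of i] by (simp add: t_def)
        qed
        also have "\<dots> = f zs + f xstar" by (simp add: f_def sum.distrib)
        finally show ?thesis .
      qed
      have "f xstar \<le> f x'" using xsopt x'C by blast
      then have fz': "f z' \<le> f zs" using exch by simp
      have z'M: "z' \<in> M"
        using z'B zsopt fz' by (auto simp: M_def is_minimizer_on_def intro: order_trans)
      have "l1_dist xstar z' < l1_dist xstar zs"
        unfolding l1_dist_def
      proof (rule sum_strict_mono_ex1)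
        show "finite (UNIV :: 'n set)" by simp
        show "\<forall>j\<in>UNIV. \<bar>xstar $ j - z' $ j\<bar> \<le> \<bar>xstar $ j - zs $ j\<bar>" by (auto simp: z'_def)
        obtain j where "j \<in> S" using S(2) by blast
        then have "j \<in> I" using S(1) by blast
        then have "\<bar>xstar $ j - z' $ j\<bar> < \<bar>xstar $ j - zs $ j\<bar>"
          using \<open>j \<in> S\<close> by (auto simp: z'_def I_def)
        then show "\<exists>j\<in>UNIV. \<bar>xstar $ j - z' $ j\<bar> < \<bar>xstar $ j - zs $ j\<bar>" by blast
      qed
      then show False using zsmin z'M by blast
    qed
  qed
qed

end
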